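(* Let $p>2$ be a prime and $d>0$ an integer. Suppose $-1\in QR_p$ and $\epsilon\in QNR_p$, where $\epsilon\in\mathbb{Z}_p^*$ satisfies $\epsilon^2\equiv-1\pmod p$. Let $n_1$ be the number of distinct values $y^4\in\mathbb{Z}_p^*$ for which $y^4-1\equiv x^2\pmod p$ has a solution with $x^2\in\mathbb{Z}_p^*$, and let $n_2$ be the number of distinct values $y^4\in\mathbb{Z}_p^*$ for which $y^4+1\equiv x^2\pmod p$ has a solution with $x^2\in\mathbb{Z}_p^*$. Then $$n_1+n_2=\frac{p-5}{4}.$$
   Context: $\mathbb{Z}_p^*=\{1,\dots,p-1\}$ is the multiplicative group modulo $p$. $QR_p=\{x\in\mathbb{Z}_p^*: \exists y\in\mathbb{Z}_p^*,\ y^2\equiv x \pmod p\}$ is the set of nonzero quadratic residues modulo $p$ and $QNR_p=\mathbb{Z}_p^*\setminus QR_p$ the set of quadratic nonresidues. *)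

theory Defs
  imports Complex_Main "HOL-Number_Theory.Number_Theory"
begin

text \<open>Z_p^* is represented by the residues {1..p-1} (as integers).\<close>

definition QR :: "int \<Rightarrow> int set" where
  "QR p = {x \<in> {1..p-1}. \<exists>y\<in>{1..p-1}. [y^2 = x] (mod p)}"

definition QNR :: "int \<Rightarrow> int set" where
  "QNR p = {1..p-1} - QR p"

definition n1 :: "int \<Rightarrow> nat" where
  "n1 p = card {t \<in> {1..p-1}. (\<exists>y\<in>{1..p-1}. [y^4 = t] (mod p)) \<and>
       (\<exists>x. x^2 mod p \<in> {1..p-1} \<and> [t - 1 = x^2] (mod p))}"

definition n2 :: "int \<Rightarrow> nat" where
  "n2 p = card {t \<in> {1..p-1}. (\<exists>y\<in>{1..p-1}. [y^4 = t] (mod p)) \<and>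
       (\<exists>x. x^2 mod p \<in> {1..p-1} \<and> [t + 1 = x^2] (mod p))}"

end

theory Submission imports Defs begin

context fixes p :: int assumes pp: "prime p" and p2: "p > 2"
begin

lemma L_cong: assumes "[a = b] (mod p)" shows "Legendre a p = Legendre b p"
proof -
  have 1: "[a = 0] (mod p) \<longleftrightarrow> [b = 0] (mod p)"
    using assms cong_sym cong_trans by blast
  have 2: "QuadRes p a \<longleftrightarrow> QuadRes p b"
    unfolding QuadRes_def using assms cong_sym cong_trans by blast
  show ?thesis unfolding Legendre_def using 1 2 by simp
qed

lemma L_vals: "Legendre a p \<in> {-1,0,1}"
  unfolding Legendre_def by auto

lemma L_1iff: "Legendre a p = 1 \<longleftrightarrow> \<not> p dvd a \<and> QuadRes p a"
  unfolding Legendre_def by (auto simp: cong_0_iff)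

lemma L_mult: "Legendre (a*b) p = Legendre a p * Legendre b p"
proof -
  obtain q :: nat where q: "p = int q" using p2 using pos_int_cases[of p] p2 by force
  have qp: "prime q" using pp q by simp
  have q2: "2 < q" using p2 q by simp
  note EC = euler_criterion[OF qp q2, folded q]
  let ?k = "(q - 1) div 2"
  have c1: "[Legendre (a*b) p = (a*b)^?k] (mod p)" using EC by blast
  have c2: "(a*b)^?k = a^?k * b^?k" by (simp add: power_mult_distrib)
  have c3: "[a^?k * b^?k = Legendre a p * Legendre b p] (mod p)"
    by (rule cong_mult[OF cong_sym[OF EC] cong_sym[OF EC]])
  have c: "[Legendre (a*b) p = Legendre a p * Legendre b p] (mod p)"
    using cong_trans[OF c1[unfolded c2] c3] .
  have v1: "Legendre (a*b) p \<in> {-1,0,1}" and v2: "Legendre a p \<in> {-1,0,1}" and v3: "Legendre b p \<in> {-1,0,1}"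
    by (rule L_vals)+
  define d where "d = Legendre (a*b) p - Legendre a p * Legendre b p"
  have pd: "p dvd d" using c unfolding d_def by (simp add: cong_iff_dvd_diff)
  have w: "Legendre a p * Legendre b p \<in> {-1,0,1}" using v2 v3 by auto
  have bd: "-2 \<le> d \<and> d \<le> 2" using v1 w unfolding d_def by auto
  have "d = 0"
  proof (rule ccontr)
    assume "d \<noteq> 0"
    hence "d > 0 \<or> -d > 0" by linarith
    moreover have "p dvd -d" using pd by simp
    ultimately have "p \<le> d \<or> p \<le> -d" using pd zdvd_imp_le by blast
    thus False using bd p2 by linarith
  qed
  thus ?thesis unfolding d_def by simp
qed

lemma L_sq: "\<not> p dvd a \<Longrightarrow> Legendre (a^2) p = 1"
  using pp unfolding L_1iff QuadRes_def
  by (auto dest: prime_dvd_power intro: cong_refl)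

lemma roots: "[x^2 = a^2] (mod p) \<Longrightarrow> [x = a] (mod p) \<or> [x = -a] (mod p)"
proof -
  assume "[x^2 = a^2] (mod p)"
  hence "p dvd (x - a) * (x + a)" by (simp add: cong_iff_dvd_diff power2_eq_square algebra_simps)
  hence "p dvd (x - a) \<or> p dvd (x + a)" using pp by (simp add: prime_dvd_mult_iff)
  thus ?thesis by (auto simp: cong_iff_dvd_diff)
qed


lemma dvd_small: "p dvd d \<Longrightarrow> \<bar>d\<bar> < p \<Longrightarrow> d = 0"
proof (rule ccontr)
  assume "p dvd d" "\<bar>d\<bar> < p" "d \<noteq> 0"
  hence "\<bar>p\<bar> \<le> \<bar>d\<bar>" using dvd_imp_le_int[of d p] by blast
  thus False using \<open>\<bar>d\<bar> < p\<close> p2 by linarith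
qed

lemma ndvd_range: "x \<in> {1..p-1} \<Longrightarrow> \<not> p dvd x"
  using zdvd_imp_le by fastforce

lemma modrange: "\<not> p dvd w \<Longrightarrow> w mod p \<in> {1..p-1}"
proof -
  assume "\<not> p dvd w"
  hence "w mod p \<noteq> 0" by (simp add: dvd_eq_mod_eq_0)
  moreover have "0 \<le> w mod p" "w mod p < p" using p2 by auto
  ultimately show ?thesis by auto
qed

lemma not_dvd2: "\<not> p dvd 2"
  using p2 zdvd_imp_le by fastforce

lemma dvd2: "p dvd 2 * z \<Longrightarrow> p dvd z"
  using pp not_dvd2 by (simp add: prime_dvd_mult_iff)

lemma cong_eq: "x \<in> {0..p-1} \<Longrightarrow> y \<in> {0..p-1} \<Longrightarrow> [x = y] (mod p) \<Longrightarrow> x = y"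
  using cong_less_imp_eq_int by auto

lemma two_roots: assumes "\<not> p dvd a"
  shows "card {x\<in>{1..p-1}. [x^2 = a^2] (mod p)} = 2"
proof -
  have "{x\<in>{1..p-1}. [x^2 = a^2] (mod p)} = {a mod p, (-a) mod p}"
  proof (intro equalityI subsetI)
    fix x assume x: "x \<in> {x\<in>{1..p-1}. [x^2 = a^2] (mod p)}"
    hence "[x = a] (mod p) \<or> [x = -a] (mod p)" using roots by blast
    moreover have "x mod p = x" using x by auto
    ultimately show "x \<in> {a mod p, (-a) mod p}" unfolding cong_def by auto
  next
    fix x assume x: "x \<in> {a mod p, (-a) mod p}"
    have "\<not> p dvd (-a)" using assms by simp
    hence "x \<in> {1..p-1}" using x modrange assms by auto
    moreover have "[x^2 = a^2] (mod p)"
    proof -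
      have "[x = a] (mod p) \<or> [x = -a] (mod p)" using x by auto
      thus ?thesis by (metis cong_pow power2_eq_square minus_mult_minus)
    qed
    ultimately show "x \<in> {x\<in>{1..p-1}. [x^2 = a^2] (mod p)}" by simp
  qed
  moreover have "a mod p \<noteq> (-a) mod p"
  proof
    assume "a mod p = (-a) mod p"
    hence "p dvd a - (-a)" by (simp add: mod_eq_dvd_iff)
    hence "p dvd 2 * a" by simp
    thus False using dvd2 assms by blast
  qed
  ultimately show ?thesis by simp
qed

lemma LQ: "(\<exists>x. x^2 mod p \<in> {1..p-1} \<and> [a = x^2] (mod p)) \<longleftrightarrow> Legendre a p = 1"
proof
  assume "\<exists>x. x^2 mod p \<in> {1..p-1} \<and> [a = x^2] (mod p)"
  then obtain x where x: "x^2 mod p \<in> {1..p-1}" "[a = x^2] (mod p)" by blast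
  have "\<not> p dvd x^2" using x(1) by (auto simp: dvd_eq_mod_eq_0)
  hence "\<not> p dvd a" using x(2) by (metis cong_dvd_iff)
  moreover have "QuadRes p a" unfolding QuadRes_def using x(2) cong_sym by blast
  ultimately show "Legendre a p = 1" using L_1iff by blast
next
  assume "Legendre a p = 1"
  hence "\<not> p dvd a" "QuadRes p a" using L_1iff by auto
  then obtain y where y: "[y^2 = a] (mod p)" unfolding QuadRes_def by blast
  have "\<not> p dvd y^2" using y \<open>\<not> p dvd a\<close> by (metis cong_dvd_iff)
  hence "y^2 mod p \<in> {1..p-1}" by (rule modrange)
  thus "\<exists>x. x^2 mod p \<in> {1..p-1} \<and> [a = x^2] (mod p)" using y cong_sym by blast
qed


definition Tp :: "(int \<times> int) set" where
  "Tp = {(x,y). x \<in> {0..p-1} \<and> y \<in> {0..p-1} \<and> [x^2 - y^2 = 1] (mod p)}"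

definition fT :: "int \<times> int \<Rightarrow> int" where "fT = (\<lambda>(x::int,y::int). (x+y) mod p)"

lemma Tp_inj: "inj_on fT Tp"
  proof (rule inj_onI)
    fix a b assume a: "a \<in> Tp" and b: "b \<in> Tp" and fab: "fT a = fT b"
    obtain x y where a': "a = (x,y)" by fastforce
    obtain x' y' where b': "b = (x',y')" by fastforce
    have r: "x \<in> {0..p-1}" "y \<in> {0..p-1}" "x' \<in> {0..p-1}" "y' \<in> {0..p-1}"
      using a b a' b' Tp_def by auto
    have h1: "p dvd (x^2 - y^2 - 1)" using a a' Tp_def by (simp add: cong_iff_dvd_diff)
    have h2: "p dvd (x'^2 - y'^2 - 1)" using b b' Tp_def by (simp add: cong_iff_dvd_diff)
    have h3: "p dvd ((x+y) - (x'+y'))" using fab a' b' fT_def by (simp add: mod_eq_dvd_iff)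
    have e: "(x-y) - (x'-y') = (x'-y')*(x^2 - y^2 - 1) - (x-y)*(x'^2 - y'^2 - 1) - (x-y)*(x'-y')*((x+y) - (x'+y'))"
      by (simp add: algebra_simps power2_eq_square)
    have h4: "p dvd ((x-y) - (x'-y'))" unfolding e using h1 h2 h3 by (simp add: dvd_diff)
    have "p dvd 2 * (x - x')"
    proof -
      have "2 * (x - x') = ((x+y) - (x'+y')) + ((x-y) - (x'-y'))" by simp
      thus ?thesis using h3 h4 by (metis dvd_add)
    qed
    hence "p dvd (x - x')" by (rule dvd2)
    moreover have "\<bar>x - x'\<bar> < p" using r by auto
    ultimately have "x - x' = 0" by (rule dvd_small)
    hence "x = x'" by simp
    have "p dvd 2 * (y - y')"
    proof -
      have "2 * (y - y') = ((x+y) - (x'+y')) - ((x-y) - (x'-y'))" by simp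
      thus ?thesis using h3 h4 by (metis dvd_diff)
    qed
    hence "p dvd (y - y')" by (rule dvd2)
    moreover have "\<bar>y - y'\<bar> < p" using r by auto
    ultimately have "y - y' = 0" by (rule dvd_small)
    hence "y = y'" by simp
    show "a = b" using a' b' \<open>x = x'\<close> \<open>y = y'\<close> by simp
  qed

lemma Tp_img: "fT ` Tp = {1..p-1}"
  proof (intro equalityI subsetI)
    fix u assume "u \<in> fT ` Tp"
    then obtain x y where xy: "(x,y) \<in> Tp" "u = (x+y) mod p" unfolding fT_def by auto
    have h1: "p dvd (x^2 - y^2 - 1)" using xy Tp_def by (simp add: cong_iff_dvd_diff)
    have "\<not> p dvd (x+y)"
    proof
      assume "p dvd (x+y)"
      hence "p dvd (x+y)*(x-y)" by simp
      moreover have "(x+y)*(x-y) - (x^2 - y^2 - 1) = 1" by (simp add: algebra_simps power2_eq_square)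
      ultimately have "p dvd 1" using h1 by (metis dvd_diff)
      thus False using p2 by simp
    qed
    thus "u \<in> {1..p-1}" using xy modrange by simp
  next
    fix u assume u: "u \<in> {1..p-1}"
    have "coprime u p" using prime_imp_coprime[OF pp ndvd_range[OF u]] by (simp add: coprime_commute)
    then obtain v where v: "[u*v = 1] (mod p)" using cong_solve_coprime_int by blast
    have op: "odd p" using pp p2 prime_odd_int by blast
    define h where "h = (p+1) div 2"
    have h2: "2*h = p+1" using op unfolding h_def by (auto elim!: oddE)
    have p1: "[p+1 = 1] (mod p)" by (simp add: cong_iff_dvd_diff)
    define x where "x = ((u+v)*h) mod p"
    define y where "y = ((u-v)*h) mod p"
    have cx: "[x = (u+v)*h] (mod p)" unfolding x_def by simp
    have cy: "[y = (u-v)*h] (mod p)" unfolding y_def by simp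
    have A: "[x^2 - y^2 = ((u+v)*h)^2 - ((u-v)*h)^2] (mod p)"
      by (rule cong_diff[OF cong_pow[OF cx] cong_pow[OF cy]])
    have B: "((u+v)*h)^2 - ((u-v)*h)^2 = (u*v)*(p+1)^2"
      unfolding h2[symmetric] by (simp add: algebra_simps power2_eq_square)
    have C0: "[(u*v)*(p+1)^2 = 1 * 1^2] (mod p)"
      by (rule cong_mult[OF v cong_pow[OF p1]])
    have C: "[(u*v)*(p+1)^2 = 1] (mod p)" using C0 by simp
    have c1: "[x^2 - y^2 = 1] (mod p)" using cong_trans[OF A[unfolded B] C] .
    have D: "[x + y = (u+v)*h + (u-v)*h] (mod p)" using cx cy by (rule cong_add)
    have E: "(u+v)*h + (u-v)*h = u*(p+1)" unfolding h2[symmetric] by (simp add: algebra_simps)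
    have F0: "[u*(p+1) = u*1] (mod p)" by (rule cong_mult[OF cong_refl p1])
    have F: "[u*(p+1) = u] (mod p)" using F0 by simp
    have "[x + y = u] (mod p)" using cong_trans[OF D[unfolded E] F] .
    hence fu: "fT (x,y) = u" unfolding fT_def using u by (simp add: cong_def)
    have "x \<in> {0..p-1}" "y \<in> {0..p-1}" unfolding x_def y_def using p2 by auto
    hence "(x,y) \<in> Tp" using c1 Tp_def by simp
    thus "u \<in> fT ` Tp" using fu by force
  qed

lemma card_Tp: "int (card Tp) = p - 1"
proof -
  have "card Tp = card {1..p-1}" using card_image[OF Tp_inj] Tp_img by simp
  thus ?thesis using p2 by simp
qed


definition T :: "(int \<times> int) set" where
  "T = {(x,y). x \<in> {1..p-1} \<and> y \<in> {1..p-1} \<and> [x^2 - y^2 = 1] (mod p)}"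

definition R :: "int \<Rightarrow> int set" where
  "R a = {x\<in>{1..p-1}. [x^2 = a] (mod p)}"

definition S :: "int set" where
  "S = {s\<in>{1..p-1}. Legendre s p = 1 \<and> Legendre (s-1) p = 1}"

lemma finite_R: "finite (R a)"
  by (rule finite_subset[of _ "{1..p-1}"]) (auto simp: R_def)

lemma card_R: assumes "Legendre a p = 1" shows "card (R a) = 2"
proof -
  have "\<not> p dvd a" "QuadRes p a" using assms L_1iff by auto
  then obtain r where r: "[r^2 = a] (mod p)" unfolding QuadRes_def by blast
  have "\<not> p dvd r^2" using cong_dvd_iff[OF r] \<open>\<not> p dvd a\<close> by simp
  hence nr: "\<not> p dvd r" by (auto simp: power2_eq_square)
  have eq: "[x^2 = a] (mod p) \<longleftrightarrow> [x^2 = r^2] (mod p)" for x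
  proof
    assume A: "[x^2 = a] (mod p)" show "[x^2 = r^2] (mod p)" using cong_trans[OF A cong_sym[OF r]] .
  next
    assume B: "[x^2 = r^2] (mod p)" show "[x^2 = a] (mod p)" using cong_trans[OF B r] .
  qed
  have "R a = {x\<in>{1..p-1}. [x^2 = r^2] (mod p)}"
    unfolding R_def using eq by simp
  thus ?thesis using two_roots[OF nr] by simp
qed

lemma T_union: "T = (\<Union>s\<in>S. R s \<times> R (s-1))"
proof (intro equalityI subsetI)
  fix z assume z: "z \<in> T"
  obtain x y where xy: "z = (x,y)" by fastforce
  have r: "x \<in> {1..p-1}" "y \<in> {1..p-1}" and c: "[x^2 - y^2 = 1] (mod p)"
    using z xy T_def by auto
  define s where "s = x^2 mod p"
  have nx: "\<not> p dvd x^2" using ndvd_range[OF r(1)] pp prime_dvd_power by blast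
  have ny: "\<not> p dvd y" using ndvd_range[OF r(2)] .
  have s1: "s \<in> {1..p-1}" unfolding s_def using modrange[OF nx] .
  have cs: "[x^2 = s] (mod p)" unfolding s_def by simp
  have "Legendre s p = Legendre (x^2) p" using L_cong[OF cs] by simp
  hence L1: "Legendre s p = 1" using L_sq ndvd_range[OF r(1)] by simp
  have cs1: "[y^2 = s - 1] (mod p)"
  proof -
    have "p dvd (x^2 - y^2 - 1)" using c by (simp add: cong_iff_dvd_diff)
    moreover have "p dvd (x^2 - s)" using cs by (simp add: cong_iff_dvd_diff)
    moreover have "y^2 - (s-1) = (x^2 - s) - (x^2 - y^2 - 1)" by simp
    ultimately have "p dvd (y^2 - (s-1))" by (metis dvd_diff)
    thus ?thesis by (simp add: cong_iff_dvd_diff)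
  qed
  have "Legendre (s-1) p = Legendre (y^2) p" using L_cong[OF cs1] by simp
  hence L2: "Legendre (s-1) p = 1" using L_sq ny by simp
  have "s \<in> S" using s1 L1 L2 S_def by simp
  moreover have "x \<in> R s" "y \<in> R (s-1)" using r cs cs1 R_def by auto
  ultimately show "z \<in> (\<Union>s\<in>S. R s \<times> R (s-1))" using xy by blast
next
  fix z assume "z \<in> (\<Union>s\<in>S. R s \<times> R (s-1))"
  then obtain s x y where z: "z = (x,y)" "s \<in> S" "x \<in> R s" "y \<in> R (s-1)" by blast
  have "[x^2 - y^2 = s - (s-1)] (mod p)" using z R_def by (intro cong_diff) auto
  hence "[x^2 - y^2 = 1] (mod p)" by simp
  thus "z \<in> T" using z R_def T_def by auto
qed

lemma card_T_S: "card T = 4 * card S"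
proof -
  have fS: "finite S" unfolding S_def by (rule finite_subset[of _ "{1..p-1}"]) auto
  have fR: "\<forall>s\<in>S. finite (R s \<times> R (s-1))" by (simp add: finite_R)
  have dj: "\<forall>s\<in>S. \<forall>s'\<in>S. s \<noteq> s' \<longrightarrow> (R s \<times> R (s-1)) \<inter> (R s' \<times> R (s'-1)) = {}"
  proof (intro ballI impI)
    fix s s' assume s: "s \<in> S" "s' \<in> S" "s \<noteq> s'"
    show "(R s \<times> R (s-1)) \<inter> (R s' \<times> R (s'-1)) = {}"
    proof (rule ccontr)
      assume "(R s \<times> R (s-1)) \<inter> (R s' \<times> R (s'-1)) \<noteq> {}"
      then obtain x where "x \<in> R s" "x \<in> R s'" by blast
      hence "[x^2 = s] (mod p)" "[x^2 = s'] (mod p)" unfolding R_def by auto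
      hence "[s = s'] (mod p)" using cong_trans cong_sym by metis
      moreover have "s \<in> {0..p-1}" "s' \<in> {0..p-1}" using s S_def by auto
      ultimately have "s = s'" using cong_eq by blast
      thus False using s by simp
    qed
  qed
  have "card T = (\<Sum>s\<in>S. card (R s \<times> R (s-1)))"
    unfolding T_union by (rule card_UN_disjoint[OF fS fR dj])
  also have "\<dots> = (\<Sum>s\<in>S. 4)"
  proof (rule sum.cong)
    fix s assume "s \<in> S"
    hence "card (R s) = 2" "card (R (s-1)) = 2" using card_R S_def by auto
    thus "card (R s \<times> R (s-1)) = 4" by (simp add: card_cartesian_product)
  qed simp
  finally show ?thesis by simp
qed


lemma finite_Tp: "finite Tp"
  by (rule finite_subset[of _ "{0..p-1} \<times> {0..p-1}"]) (auto simp: Tp_def)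

lemma card_T:
  assumes e1: "e \<in> {1..p-1}" and e2: "[e^2 = -1] (mod p)"
  shows "int (card T) = p - 5"
proof -
  define E where "E = {(1,0),(p-1,0),(0,e),(0,p-e)}"
  have op: "odd p" using pp p2 prime_odd_int by blast
  have pm1: "[p - 1 = -1] (mod p)" by (simp add: cong_iff_dvd_diff)
  have E_sub: "E \<subseteq> Tp"
  proof -
    have a: "(1,0) \<in> Tp" using p2 by (simp add: Tp_def)
    have "p dvd ((p-1)^2 - 0^2 - 1)"
    proof -
      have "(p-1)^2 - 0^2 - 1 = p * (p - 2)" by (simp add: algebra_simps power2_eq_square)
      thus ?thesis by simp
    qed
    hence b: "(p-1,0) \<in> Tp" using p2 by (simp add: Tp_def cong_iff_dvd_diff)
    have de: "p dvd (e^2 + 1)" using e2 by (simp add: cong_iff_dvd_diff)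
    have "p dvd (0^2 - e^2 - 1)"
    proof -
      have h: "0^2 - e^2 - 1 = - (e^2 + 1)" by simp
      show ?thesis using de by (subst h) (simp only: dvd_minus_iff)
    qed
    hence c: "(0,e) \<in> Tp" using e1 by (simp add: Tp_def cong_iff_dvd_diff)
    have "p dvd (0^2 - (p-e)^2 - 1)"
    proof -
      have h: "0^2 - (p-e)^2 - 1 = p * (2*e - p) - (e^2 + 1)" by (simp add: algebra_simps power2_eq_square)
      show ?thesis by (subst h) (rule dvd_diff, simp, rule de)
    qed
    hence d: "(0,p-e) \<in> Tp" using e1 by (simp add: Tp_def cong_iff_dvd_diff)
    show ?thesis using a b c d E_def by simp
  qed
  have eq: "T = Tp - E"
  proof (intro equalityI subsetI)
    fix z assume "z \<in> T"
    then obtain x y where z: "z = (x,y)" "x \<in> {1..p-1}" "y \<in> {1..p-1}" "[x^2 - y^2 = 1] (mod p)"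
      unfolding T_def by blast
    thus "z \<in> Tp - E" unfolding Tp_def E_def by auto
  next
    fix z assume zz: "z \<in> Tp - E"
    then obtain x y where z: "z = (x,y)" "x \<in> {0..p-1}" "y \<in> {0..p-1}" "[x^2 - y^2 = 1] (mod p)"
      unfolding Tp_def by blast
    have nE: "z \<notin> E" using zz by simp
    have y0: "y \<noteq> 0"
    proof
      assume y: "y = 0"
      hence "[x^2 = 1^2] (mod p)" using z by simp
      hence "[x = 1] (mod p) \<or> [x = -1] (mod p)" by (rule roots)
      hence "[x = 1] (mod p) \<or> [x = p - 1] (mod p)" using pm1 cong_sym cong_trans by metis
      moreover have "1 \<in> {0..p-1}" "p - 1 \<in> {0..p-1}" using p2 by auto
      ultimately have "x = 1 \<or> x = p - 1" using cong_eq z(2) by blast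
      thus False using nE z y E_def by auto
    qed
    have x0: "x \<noteq> 0"
    proof
      assume x: "x = 0"
      have "p dvd (0^2 - y^2 - 1)" using z x by (simp add: cong_iff_dvd_diff)
      moreover have "p dvd (e^2 + 1)" using e2 by (simp add: cong_iff_dvd_diff)
      moreover have "y^2 - e^2 = - (0^2 - y^2 - 1) - (e^2 + 1)" by simp
      ultimately have "p dvd (y^2 - e^2)" by (metis dvd_diff dvd_minus_iff)
      hence "[y^2 = e^2] (mod p)" by (simp add: cong_iff_dvd_diff)
      hence "[y = e] (mod p) \<or> [y = -e] (mod p)" by (rule roots)
      moreover have "[-e = p - e] (mod p)" by (simp add: cong_iff_dvd_diff)
      ultimately have "[y = e] (mod p) \<or> [y = p - e] (mod p)" using cong_trans by blast
      moreover have "e \<in> {0..p-1}" "p - e \<in> {0..p-1}" using e1 by auto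
      ultimately have "y = e \<or> y = p - e" using cong_eq z(3) by blast
      thus False using nE z x E_def by auto
    qed
    show "z \<in> T" using z x0 y0 unfolding T_def by auto
  qed
  have "1 \<noteq> p - 1" using p2 by simp
  moreover have "e \<noteq> p - e"
  proof
    assume "e = p - e" hence "p = 2 * e" by simp
    thus False using op by simp
  qed
  ultimately have cE: "card E = 4" unfolding E_def using e1 p2 by auto
  have "card T = card Tp - card E" unfolding eq
    by (rule card_Diff_subset[OF _ E_sub]) (simp add: E_def)
  moreover have "card E \<le> card Tp" using card_mono[OF finite_Tp E_sub] .
  ultimately have "int (card T) = int (card Tp) - int (card E)" by simp
  thus ?thesis using card_Tp cE by simp
qed


lemma fourth_any: "\<not> p dvd w \<Longrightarrow> [w^4 = t] (mod p) \<Longrightarrow> \<exists>y\<in>{1..p-1}. [y^4 = t] (mod p)"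
proof -
  assume w: "\<not> p dvd w" and c: "[w^4 = t] (mod p)"
  have "[(w mod p)^4 = w^4] (mod p)" by (rule cong_pow) simp
  hence "[(w mod p)^4 = t] (mod p)" using c by (rule cong_trans)
  thus ?thesis using modrange[OF w] by blast
qed

lemma F1: "\<exists>y\<in>{1..p-1}. [y^4 = t] (mod p) \<Longrightarrow> Legendre t p = 1"
proof -
  assume "\<exists>y\<in>{1..p-1}. [y^4 = t] (mod p)"
  then obtain y where y: "y \<in> {1..p-1}" "[y^4 = t] (mod p)" by blast
  have h: "y^4 = (y^2)^2" by simp
  have "Legendre t p = Legendre (y^4) p" using L_cong[OF cong_sym[OF y(2)]] .
  moreover have "\<not> p dvd y^2" using ndvd_range[OF y(1)] pp prime_dvd_power by blast
  hence "Legendre ((y^2)^2) p = 1" by (rule L_sq)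
  ultimately show ?thesis unfolding h by simp
qed

context
  fixes e :: int
  assumes e1: "e \<in> {1..p-1}" and e2: "[e^2 = -1] (mod p)"
    and Le: "Legendre e p = -1" and Lm: "Legendre (-1) p = 1"
begin

lemma F4: "Legendre (p - a) p = Legendre a p"
proof -
  have "[p - a = -1 * a] (mod p)" by (simp add: cong_iff_dvd_diff)
  hence "Legendre (p - a) p = Legendre (-1 * a) p" by (rule L_cong)
  also have "\<dots> = Legendre (-1) p * Legendre a p" by (rule L_mult)
  also have "\<dots> = Legendre a p" using Lm by simp
  finally show ?thesis .
qed

lemma F2: assumes s: "s \<in> {1..p-1}" "Legendre s p = 1"
  shows "(\<exists>y\<in>{1..p-1}. [y^4 = s] (mod p)) \<or> (\<exists>y\<in>{1..p-1}. [y^4 = p - s] (mod p))"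
proof -
  have "\<not> p dvd s" using ndvd_range[OF s(1)] .
  have "QuadRes p s" using s(2) L_1iff by blast
  then obtain x where x: "[x^2 = s] (mod p)" unfolding QuadRes_def by blast
  have "\<not> p dvd x^2" using cong_dvd_iff[OF x] \<open>\<not> p dvd s\<close> by simp
  hence nx: "\<not> p dvd x" by (auto simp: power2_eq_square)
  have "Legendre x p \<noteq> 0" using nx unfolding Legendre_def by (auto simp: cong_0_iff)
  hence "Legendre x p = 1 \<or> Legendre x p = -1" using L_vals[of x] by auto
  thus ?thesis
  proof
    assume "Legendre x p = 1"
    hence "\<not> p dvd x" "QuadRes p x" using L_1iff by auto
    then obtain w where w: "[w^2 = x] (mod p)" unfolding QuadRes_def by blast
    have "\<not> p dvd w^2" using cong_dvd_iff[OF w] nx by simp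
    hence nw: "\<not> p dvd w" by (auto simp: power2_eq_square)
    have "[(w^2)^2 = x^2] (mod p)" using w by (rule cong_pow)
    hence "[w^4 = s] (mod p)" using x by (simp add: cong_trans flip: power_mult)
    thus ?thesis using fourth_any[OF nw] by blast
  next
    assume "Legendre x p = -1"
    hence "Legendre (e*x) p = 1" using L_mult Le by simp
    hence "\<not> p dvd (e*x)" "QuadRes p (e*x)" using L_1iff by auto
    then obtain w where w: "[w^2 = e*x] (mod p)" unfolding QuadRes_def by blast
    have "\<not> p dvd w^2" using cong_dvd_iff[OF w] \<open>\<not> p dvd (e*x)\<close> by simp
    hence nw: "\<not> p dvd w" by (auto simp: power2_eq_square)
    have c1: "[(w^2)^2 = (e*x)^2] (mod p)" using w by (rule cong_pow)
    have c2: "[e^2 * x^2 = -1 * s] (mod p)" by (rule cong_mult[OF e2 x])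
    have c3: "[-1 * s = p - s] (mod p)" by (simp add: cong_iff_dvd_diff)
    have q2: "(w^2)^2 = w^4" by (simp flip: power_mult)
    have q1: "(e*x)^2 = e^2 * x^2" by (simp add: power_mult_distrib)
    have "[w^4 = p - s] (mod p)" using cong_trans[OF cong_trans[OF c1[unfolded q1 q2] c2] c3] .
    thus ?thesis using fourth_any[OF nw] by blast
  qed
qed

lemma F3: assumes t: "\<exists>y\<in>{1..p-1}. [y^4 = t] (mod p)" and t': "\<exists>y\<in>{1..p-1}. [y^4 = p - t] (mod p)"
  shows False
proof -
  obtain y where y: "y \<in> {1..p-1}" "[y^4 = t] (mod p)" using t by blast
  obtain z where z: "z \<in> {1..p-1}" "[z^4 = p - t] (mod p)" using t' by blast
  have ny: "\<not> p dvd y" and nz: "\<not> p dvd z" using ndvd_range y(1) z(1) by auto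
  have "(e*y^2)^2 = e^2 * y^4" by (simp add: power_mult_distrib flip: power_mult)
  moreover have "[e^2 * y^4 = -1 * t] (mod p)" by (rule cong_mult[OF e2 y(2)])
  moreover have "[-1 * t = p - t] (mod p)" by (simp add: cong_iff_dvd_diff)
  ultimately have "[(e*y^2)^2 = p - t] (mod p)" using cong_trans by metis
  moreover have "(z^2)^2 = z^4" by (simp flip: power_mult)
  ultimately have "[(z^2)^2 = (e*y^2)^2] (mod p)" using z(2) cong_sym cong_trans by metis
  hence "[z^2 = e*y^2] (mod p) \<or> [z^2 = -(e*y^2)] (mod p)" by (rule roots)
  moreover have "Legendre (z^2) p = 1" using L_sq nz by blast
  moreover have "Legendre (e*y^2) p = -1" using L_mult Le L_sq ny by simp
  moreover have "Legendre (-(e*y^2)) p = -1"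
  proof -
    have "-(e*y^2) = -1 * (e*y^2)" by simp
    hence "Legendre (-(e*y^2)) p = Legendre (-1) p * Legendre (e*y^2) p" using L_mult by metis
    thus ?thesis using Lm L_mult Le L_sq ny by simp
  qed
  ultimately show False using L_cong by fastforce
qed


lemma card_S_split:
  "card S = card {t\<in>{1..p-1}. (\<exists>y\<in>{1..p-1}. [y^4 = t] (mod p)) \<and> Legendre (t-1) p = 1}
          + card {t\<in>{1..p-1}. (\<exists>y\<in>{1..p-1}. [y^4 = t] (mod p)) \<and> Legendre (t+1) p = 1}"
  (is "_ = card ?A1 + card ?A2")
proof -
  define g where "g = (\<lambda>t::int. p - t)"
  have S_eq: "S = ?A1 \<union> g ` ?A2"
  proof (intro equalityI subsetI)
    fix s assume sS: "s \<in> S"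
    hence s: "s \<in> {1..p-1}" "Legendre s p = 1" "Legendre (s-1) p = 1" unfolding S_def by auto
    from F2[OF s(1,2)] show "s \<in> ?A1 \<union> g ` ?A2"
    proof
      assume "\<exists>y\<in>{1..p-1}. [y^4 = s] (mod p)"
      thus ?thesis using s by blast
    next
      assume f: "\<exists>y\<in>{1..p-1}. [y^4 = p - s] (mod p)"
      have h: "p - s + 1 = p - (s - 1)" by simp
      have "Legendre (p - s + 1) p = 1" unfolding h using F4[of "s-1"] s(3) by simp
      moreover have "p - s \<in> {1..p-1}" using s(1) by auto
      ultimately have "p - s \<in> ?A2" using f by blast
      moreover have "s = g (p - s)" unfolding g_def by simp
      ultimately show ?thesis by blast
    qed
  next
    fix s assume "s \<in> ?A1 \<union> g ` ?A2"
    thus "s \<in> S"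
    proof
      assume "s \<in> ?A1"
      thus "s \<in> S" using F1 unfolding S_def by blast
    next
      assume "s \<in> g ` ?A2"
      then obtain t where t: "t \<in> {1..p-1}" "\<exists>y\<in>{1..p-1}. [y^4 = t] (mod p)" "Legendre (t+1) p = 1" "s = p - t"
        unfolding g_def by blast
      have "Legendre s p = 1" using F4[of t] F1[OF t(2)] t(4) by simp
      moreover have h: "s - 1 = p - (t + 1)" using t(4) by simp
      have "Legendre (s-1) p = 1" unfolding h using F4[of "t+1"] t(3) by simp
      moreover have "s \<in> {1..p-1}" using t by auto
      ultimately show "s \<in> S" unfolding S_def by blast
    qed
  qed
  have disj: "?A1 \<inter> g ` ?A2 = {}"
  proof (rule ccontr)
    assume "?A1 \<inter> g ` ?A2 \<noteq> {}"
    then obtain t where t: "t \<in> ?A2" "g t \<in> ?A1" by blast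
    have "\<exists>y\<in>{1..p-1}. [y^4 = t] (mod p)" using t(1) by blast
    moreover have "\<exists>y\<in>{1..p-1}. [y^4 = p - t] (mod p)" using t(2) unfolding g_def by blast
    ultimately show False by (rule F3)
  qed
  have inj: "inj_on g ?A2" unfolding g_def by (rule inj_onI) simp
  have f1: "finite ?A1" by (rule finite_subset[of _ "{1..p-1}"]) auto
  have f2: "finite (g ` ?A2)" by (rule finite_imageI, rule finite_subset[of _ "{1..p-1}"]) auto
  have "card S = card ?A1 + card (g ` ?A2)" unfolding S_eq by (rule card_Un_disjoint[OF f1 f2 disj])
  thus ?thesis using card_image[OF inj] by simp
qed

end
end

theorem lemma6:
  fixes p d \<epsilon> :: int
  assumes "prime p" and "p > 2" and "d > 0"
    and "(-1) mod p \<in> QR p"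
    and "\<epsilon> \<in> {1..p-1}" and "[\<epsilon>^2 = -1] (mod p)" and "\<epsilon> \<in> QNR p"
  shows "real (n1 p + n2 p) = (real_of_int p - 5) / 4"
proof -
  note pp = assms(1) and p2 = assms(2)
  have Lm: "Legendre (-1) p = 1"
  proof -
    obtain y where "[y^2 = (-1) mod p] (mod p)" using assms(4) unfolding QR_def by blast
    hence "[y^2 = -1] (mod p)" by simp
    hence "QuadRes p (-1)" unfolding QuadRes_def by blast
    moreover have "\<not> p dvd -1" using p2 by simp
    ultimately show ?thesis using L_1iff[OF pp p2] by blast
  qed
  have Le: "Legendre \<epsilon> p = -1"
  proof -
    have ne: "\<not> p dvd \<epsilon>" using ndvd_range[OF pp p2 assms(5)] .
    have "Legendre \<epsilon> p \<noteq> 0" using ne unfolding Legendre_def by (auto simp: cong_0_iff)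
    moreover have "Legendre \<epsilon> p \<noteq> 1"
    proof
      assume "Legendre \<epsilon> p = 1"
      hence "QuadRes p \<epsilon>" using L_1iff[OF pp p2] by blast
      then obtain y where y: "[y^2 = \<epsilon>] (mod p)" unfolding QuadRes_def by blast
      have "\<not> p dvd y^2" using cong_dvd_iff[OF y] ne by simp
      hence ny: "\<not> p dvd y" by (auto simp: power2_eq_square)
      have "[(y mod p)^2 = y^2] (mod p)" by (rule cong_pow) simp
      hence "[(y mod p)^2 = \<epsilon>] (mod p)" using y by (rule cong_trans)
      hence "\<epsilon> \<in> QR p" unfolding QR_def using assms(5) modrange[OF pp p2 ny] by blast
      thus False using assms(7) unfolding QNR_def by blast
    qed
    ultimately show ?thesis using L_vals[OF pp p2, of \<epsilon>] by auto
  qed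
  have "n1 p + n2 p = card (S p)"
    unfolding n1_def n2_def LQ[OF pp p2]
    using card_S_split[OF pp p2 assms(5,6) Le Lm] by simp
  moreover have "int (card (T p)) = p - 5" by (rule card_T[OF pp p2 assms(5,6)])
  moreover have "card (T p) = 4 * card (S p)" by (rule card_T_S[OF pp p2])
  ultimately have h: "4 * int (n1 p + n2 p) = p - 5" by simp
  hence "real_of_int (4 * int (n1 p + n2 p)) = real_of_int (p - 5)" by simp
  hence "4 * real (n1 p + n2 p) = real_of_int p - 5" by simp
  thus ?thesis by simp
qed

end
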